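(* Let $\sigma\in\mathrm{Av}_n(312)$ and let $i$ be a descent of $\sigma$ (i.e. $\sigma(i)>\sigma(i+1)$). Let $j\in[n]$ be the minimal index such that $\sigma(k)\ge\sigma(i)$ for all $k\in[j,i]$, and let $\tau=\sigma\circ(i\ \ i{+}1)$ be obtained from $\sigma$ by swapping the entries in positions $i$ and $i+1$. Then \[ \pi_\downarrow(\tau)=\sigma\circ\begin{pmatrix} i{+}1 & i & \cdots & j{+}1 & j\end{pmatrix}, \] i.e. $\pi_\downarrow(\tau)$ is obtained from $\sigma$ by moving the entry $\sigma(i+1)$ to position $j$ and shifting the entries in positions $j,\dots,i$ one place to the right.
   Context: $\mathrm{Av}_n(312)$ is the set of permutations $\sigma\in S_n$ with no indices $i_1<i_2<i_3$ such that $\sigma(i_1)>\sigma(i_3)>\sigma(i_2)$. Permutations are written in one-line notation and composed as functions; the cycle $(i{+}1\ i\ \cdots\ j)$ maps $i+1\mapsto i\mapsto\cdots\mapsto j\mapsto i+1$. For $\sigma\in S_n$, an allowable swap is available if there are indices $a,b$ with $a+1<b$ and $\sigma(a+1)<\sigma(b)<\sigma(a)$; it exchanges the entries in positions $a$ and $a+1$. The projection $\pi_\downarrow:S_n\to\mathrm{Av}_n(312)$ sends $\sigma$ to the permutation obtained by repeatedly applying allowable swaps until none is available; this result is known to be independent of the order of swaps. *)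

theory Defs
  imports "HOL-Combinatorics.Combinatorics"
begin

text \<open>Permutations of [n] = {1..n} are functions nat => nat permuting {1..n}
  (identity outside); one-line notation: sigma(1),...,sigma(n).\<close>

definition avoids312 :: "nat \<Rightarrow> (nat \<Rightarrow> nat) \<Rightarrow> bool" where
  "avoids312 n \<sigma> \<longleftrightarrow> \<sigma> permutes {1..n} \<and>
     \<not> (\<exists>i1 i2 i3. 1 \<le> i1 \<and> i1 < i2 \<and> i2 < i3 \<and> i3 \<le> n \<and>
              \<sigma> i1 > \<sigma> i3 \<and> \<sigma> i3 > \<sigma> i2)"

definition allowable_swap :: "nat \<Rightarrow> (nat \<Rightarrow> nat) \<Rightarrow> (nat \<Rightarrow> nat) \<Rightarrow> bool" where
  "allowable_swap n \<sigma> \<tau> \<longleftrightarrow> (\<exists>a b. 1 \<le> a \<and> a + 1 < b \<and> b \<le> n \<and>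
       \<sigma> (a + 1) < \<sigma> b \<and> \<sigma> b < \<sigma> a \<and> \<tau> = \<sigma> \<circ> transpose a (a + 1))"

definition swap_stable :: "nat \<Rightarrow> (nat \<Rightarrow> nat) \<Rightarrow> bool" where
  "swap_stable n \<sigma> \<longleftrightarrow> \<not> (\<exists>\<tau>. allowable_swap n \<sigma> \<tau>)"

text \<open>pi_down: the result of applying allowable swaps until none is available
  (independent of the order of swaps).\<close>
definition pi_down :: "nat \<Rightarrow> (nat \<Rightarrow> nat) \<Rightarrow> (nat \<Rightarrow> nat)" where
  "pi_down n \<sigma> = (THE \<rho>. (allowable_swap n)\<^sup>*\<^sup>* \<sigma> \<rho> \<and> swap_stable n \<rho>)"

end

theory Submission
  imports Defs
begin
definition Inv :: "nat \<Rightarrow> (nat \<Rightarrow> nat) \<Rightarrow> (nat \<times> nat) set" where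
"Inv n \<sigma> = {(u,w). \<exists>p q. 1 \<le> p \<and> p < q \<and> q \<le> n \<and> \<sigma> p = w \<and> \<sigma> q = u \<and> u < w \<and>
   \<not>(\<exists>r. q < r \<and> r \<le> n \<and> u < \<sigma> r \<and> \<sigma> r < w)}"

definition Invs :: "nat \<Rightarrow> (nat \<Rightarrow> nat) \<Rightarrow> (nat \<times> nat) set" where
"Invs n \<sigma> = {(u,w). \<exists>p q. 1 \<le> p \<and> p < q \<and> q \<le> n \<and> \<sigma> p = w \<and> \<sigma> q = u \<and> u < w}"

lemma swap_Inv_sub:
  assumes "1 \<le> a" "a+1 < b" "b \<le> n" "min (\<sigma> a) (\<sigma> (a+1)) < \<sigma> b" "\<sigma> b < max (\<sigma> a) (\<sigma> (a+1))"
  shows "Inv n \<sigma> \<subseteq> Inv n (\<sigma> \<circ> transpose a (a+1))"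
proof
  fix x assume "x \<in> Inv n \<sigma>"
  then obtain u w p q where x: "x = (u,w)" and pq: "1 \<le> p" "p < q" "q \<le> n" "\<sigma> p = w" "\<sigma> q = u" "u < w"
    and nr: "\<not>(\<exists>r. q < r \<and> r \<le> n \<and> u < \<sigma> r \<and> \<sigma> r < w)"
    unfolding Inv_def by blast
  define t where "t = transpose a (a+1)"
  have tt: "\<And>z. t (t z) = z" unfolding t_def by simp
  have notpair: "\<not> (p = a \<and> q = a+1)"
  proof
    assume "p = a \<and> q = a+1"
    then show False using nr assms pq by auto
  qed
  have lt: "t p < t q" using notpair pq unfolding t_def transpose_def by auto
  have r1: "1 \<le> t p" "t q \<le> n" using pq assms unfolding t_def transpose_def by auto
  have v: "(\<sigma> \<circ> t) (t p) = w" "(\<sigma> \<circ> t) (t q) = u" using pq tt by auto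
  have nr': "\<not>(\<exists>r'. t q < r' \<and> r' \<le> n \<and> u < (\<sigma> \<circ> t) r' \<and> (\<sigma> \<circ> t) r' < w)"
  proof
    assume "\<exists>r'. t q < r' \<and> r' \<le> n \<and> u < (\<sigma> \<circ> t) r' \<and> (\<sigma> \<circ> t) r' < w"
    then obtain r' where r': "t q < r'" "r' \<le> n" "u < \<sigma> (t r')" "\<sigma> (t r') < w" by auto
    show False
    proof (cases "t q = a \<and> r' = a+1")
      case True
      then have "q = a+1" using tt by (metis t_def transpose_apply_first)
      moreover have "t r' = a" using True unfolding t_def by simp
      ultimately show False using nr assms r' pq by (metis add_lessD1 max.strict_order_iff min.absorb2 min.commute order.strict_trans less_imp_le max_def)
    next
      case False
      then have "q < t r'" using r' unfolding t_def transpose_def by (auto split: if_splits)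
      moreover have "t r' \<le> n" using r' assms unfolding t_def transpose_def by auto
      ultimately show False using nr r' by auto
    qed
  qed
  have "\<exists>p' q'. 1 \<le> p' \<and> p' < q' \<and> q' \<le> n \<and> (\<sigma> \<circ> t) p' = w \<and> (\<sigma> \<circ> t) q' = u \<and> u < w \<and>
   \<not>(\<exists>r. q' < r \<and> r \<le> n \<and> u < (\<sigma> \<circ> t) r \<and> (\<sigma> \<circ> t) r < w)"
    apply (rule exI[of _ "t p"], rule exI[of _ "t q"])
    using lt r1 v nr' pq(6) by blast
  then show "x \<in> Inv n (\<sigma> \<circ> transpose a (a+1))"
    unfolding Inv_def x t_def by simp
qed

lemma swap_Inv_eq:
  assumes "allowable_swap n \<sigma> \<tau>"
  shows "Inv n \<sigma> = Inv n \<tau>"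
proof -
  obtain a b where ab: "1 \<le> a" "a + 1 < b" "b \<le> n" "\<sigma> (a + 1) < \<sigma> b" "\<sigma> b < \<sigma> a"
     "\<tau> = \<sigma> \<circ> transpose a (a + 1)"
    using assms unfolding allowable_swap_def by blast
  have s1: "Inv n \<sigma> \<subseteq> Inv n \<tau>" using swap_Inv_sub[of a b n \<sigma>] ab by simp
  have tv: "\<tau> a = \<sigma> (a+1)" "\<tau> (a+1) = \<sigma> a" "\<tau> b = \<sigma> b" using ab by auto
  have st: "\<sigma> = \<tau> \<circ> transpose a (a+1)" using ab by (auto simp: fun_eq_iff)
  have "Inv n \<tau> \<subseteq> Inv n (\<tau> \<circ> transpose a (a+1))" using swap_Inv_sub[of a b n \<tau>] ab(1-5) tv by simp
  then have s2: "Inv n \<tau> \<subseteq> Inv n \<sigma>" using st by simp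
  show ?thesis using s1 s2 by blast
qed

lemma swap_perm:
  assumes "allowable_swap n \<sigma> \<tau>" "\<sigma> permutes {1..n}"
  shows "\<tau> permutes {1..n}"
proof -
  obtain a b where ab: "1 \<le> a" "a + 1 < b" "b \<le> n" "\<tau> = \<sigma> \<circ> transpose a (a + 1)"
    using assms unfolding allowable_swap_def by blast
  show ?thesis unfolding ab(4)
    by (rule permutes_compose[OF permutes_swap_id assms(2)]) (use ab in auto)
qed

lemma star_inv:
  assumes "(allowable_swap n)\<^sup>*\<^sup>* \<sigma> \<rho>"
  shows "Inv n \<sigma> = Inv n \<rho> \<and> (\<sigma> permutes {1..n} \<longrightarrow> \<rho> permutes {1..n})"
  using assms
proof (induction rule: rtranclp_induct)
  case base then show ?case by simp
next
  case (step y z) then show ?case using swap_Inv_eq swap_perm by metis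
qed

lemma stable_Invs:
  assumes "swap_stable n \<rho>" "inj \<rho>"
  shows "Invs n \<rho> = Inv n \<rho>"
proof
  show "Inv n \<rho> \<subseteq> Invs n \<rho>" unfolding Inv_def Invs_def by blast
next
  show "Invs n \<rho> \<subseteq> Inv n \<rho>"
  proof
    fix x assume "x \<in> Invs n \<rho>"
    then obtain u w p q where x: "x = (u,w)" and pq: "1 \<le> p" "p < q" "q \<le> n" "\<rho> p = w" "\<rho> q = u" "u < w"
      unfolding Invs_def by blast
    have nr: "\<not>(\<exists>r. q < r \<and> r \<le> n \<and> u < \<rho> r \<and> \<rho> r < w)"
    proof
      assume "\<exists>r. q < r \<and> r \<le> n \<and> u < \<rho> r \<and> \<rho> r < w"
      then obtain r where r: "q < r" "r \<le> n" "u < \<rho> r" "\<rho> r < w" by blast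
      define m where "m = (LEAST m. p < m \<and> \<rho> m < \<rho> r)"
      have ex: "p < q \<and> \<rho> q < \<rho> r" using pq r by simp
      have m1: "p < m" "\<rho> m < \<rho> r" using LeastI[of "\<lambda>m. p < m \<and> \<rho> m < \<rho> r", OF ex] m_def by auto
      have m2: "m \<le> q" using Least_le[of "\<lambda>m. p < m \<and> \<rho> m < \<rho> r", OF ex] m_def by auto
      have m3: "\<not> \<rho> (m-1) < \<rho> r"
      proof (cases "m - 1 = p")
        case True then show ?thesis using pq r by simp
      next
        case False
        then have "p < m - 1" using m1 by simp
        then show ?thesis using not_less_Least[of "m-1" "\<lambda>m. p < m \<and> \<rho> m < \<rho> r"] m_def m1 by auto
      qed
      have "m - 1 \<noteq> r" using m2 r by linarith
      then have "\<rho> (m-1) \<noteq> \<rho> r" using assms(2) by (simp add: inj_eq)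
      with m3 have m4: "\<rho> r < \<rho> (m-1)" by simp
      have mm: "m - 1 + 1 = m" using m1 by simp
      have "allowable_swap n \<rho> (\<rho> \<circ> transpose (m-1) (m-1+1))"
        unfolding allowable_swap_def
        apply (rule exI[of _ "m-1"], rule exI[of _ r])
        using m1 m2 m4 pq r by (simp add: mm)
      then show False using assms(1) unfolding swap_stable_def by blast
    qed
    show "x \<in> Inv n \<rho>" unfolding Inv_def x using pq nr by blast
  qed
qed

lemma Invs_eq_aux:
  assumes "\<rho> permutes {1..n}" "\<rho>' permutes {1..n}" "Invs n \<rho>' \<subseteq> Invs n \<rho>"
    and k: "\<rho> k < \<rho>' k" "\<And>m. m < k \<Longrightarrow> \<rho> m = \<rho>' m" "k \<in> {1..n}"
  shows False
proof -
  have "\<rho> k \<in> {1..n}" using permutes_in_image[OF assms(1)] k by blast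
  then obtain m where m: "m \<in> {1..n}" "\<rho>' m = \<rho> k" using permutes_image[OF assms(2)] by (metis imageE)
  have "m \<noteq> k" using m k by auto
  moreover have "\<not> m < k"
  proof
    assume "m < k"
    then have "\<rho> m = \<rho> k" using k m by simp
    then show False using permutes_inj[OF assms(1)] \<open>m < k\<close> by (metis inj_eq less_irrefl)
  qed
  ultimately have "k < m" by simp
  then have "(\<rho> k, \<rho>' k) \<in> Invs n \<rho>'" unfolding Invs_def using m k by auto
  then have "(\<rho> k, \<rho>' k) \<in> Invs n \<rho>" using assms(3) by blast
  then have "\<exists>p q. 1 \<le> p \<and> p < q \<and> q \<le> n \<and> \<rho> p = \<rho>' k \<and> \<rho> q = \<rho> k"
    unfolding Invs_def by auto
  then obtain p q where pq: "1 \<le> p" "p < q" "q \<le> n" "\<rho> p = \<rho>' k" "\<rho> q = \<rho> k"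
    by blast
  have "q = k" using pq permutes_inj[OF assms(1)] by (metis inj_eq)
  then have "\<rho>' p = \<rho>' k" using pq k by simp
  then show False using permutes_inj[OF assms(2)] pq \<open>q = k\<close> by (metis inj_eq less_irrefl)
qed

lemma Invs_eq:
  assumes "\<rho> permutes {1..n}" "\<rho>' permutes {1..n}" "Invs n \<rho>' = Invs n \<rho>"
  shows "\<rho> = \<rho>'"
proof (rule ccontr)
  assume "\<rho> \<noteq> \<rho>'"
  then have ex: "\<exists>k. \<rho> k \<noteq> \<rho>' k" by (auto simp: fun_eq_iff)
  define k where "k = (LEAST k. \<rho> k \<noteq> \<rho>' k)"
  have k1: "\<rho> k \<noteq> \<rho>' k" using LeastI_ex[OF ex] k_def by simp
  have k2: "\<And>m. m < k \<Longrightarrow> \<rho> m = \<rho>' m" using not_less_Least k_def by blast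
  have k3: "k \<in> {1..n}" using k1 assms(1,2) by (metis permutes_not_in)
  show False
  proof (cases "\<rho> k < \<rho>' k")
    case True then show False using Invs_eq_aux[OF assms(1,2)] assms(3) k2 k3 by blast
  next
    case False
    then have "\<rho>' k < \<rho> k" using k1 by simp
    then show False using Invs_eq_aux[OF assms(2,1)] assms(3) k2 k3 by (metis order_refl)
  qed
qed

lemma avoid_stable:
  assumes "avoids312 n \<rho>" shows "swap_stable n \<rho>"
  unfolding swap_stable_def
proof
  assume "\<exists>\<tau>. allowable_swap n \<rho> \<tau>"
  then obtain a b where ab: "1 \<le> a" "a + 1 < b" "b \<le> n" "\<rho> (a + 1) < \<rho> b" "\<rho> b < \<rho> a"
    unfolding allowable_swap_def by blast
  have "\<exists>i1 i2 i3. 1 \<le> i1 \<and> i1 < i2 \<and> i2 < i3 \<and> i3 \<le> n \<and> \<rho> i1 > \<rho> i3 \<and> \<rho> i3 > \<rho> i2"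
    apply (rule exI[of _ a], rule exI[of _ "a+1"], rule exI[of _ b]) using ab by simp
  then show False using assms unfolding avoids312_def by blast
qed

lemma cyc_formula:
  assumes "j \<le> m"
  shows "cycle_of_list (rev [j..<Suc m]) x = (if j < x \<and> x \<le> m then x - 1 else if x = j then m else x)"
  using assms
proof (induction m)
  case 0 then show ?case by simp
next
  case (Suc m)
  show ?case
  proof (cases "j = Suc m")
    case True then show ?thesis by simp
  next
    case False
    then have jm: "j \<le> m" using Suc.prems by simp
    have "rev [j..<Suc (Suc m)] = Suc m # m # rev [j..<m]"
      using jm by simp
    moreover have "rev [j..<Suc m] = m # rev [j..<m]" using jm by simp
    ultimately have "cycle_of_list (rev [j..<Suc (Suc m)]) = transpose (Suc m) m \<circ> cycle_of_list (rev [j..<Suc m])"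
      by simp
    then have e: "cycle_of_list (rev [j..<Suc (Suc m)]) x = transpose (Suc m) m (if j < x \<and> x \<le> m then x - 1 else if x = j then m else x)"
      using Suc.IH[OF jm] by simp
    show ?thesis
    proof (cases "x = j")
      case True then show ?thesis using e jm by simp
    next
      case F1: False
      show ?thesis
      proof (cases "j < x \<and> x \<le> m")
        case True then show ?thesis using e jm F1 by (auto simp: transpose_def)
      next
        case False
        then show ?thesis using e jm F1 by (auto simp: transpose_def)
      qed
    qed
  qed
qed

theorem proposition4p2:
  fixes n i :: nat and \<sigma> :: "nat \<Rightarrow> nat"
  assumes "avoids312 n \<sigma>"
    and "1 \<le> i" and "i < n" and "\<sigma> i > \<sigma> (i + 1)"
  shows "pi_down n (\<sigma> \<circ> transpose i (i + 1))
           = \<sigma> \<circ> cycle_of_list (rev [(LEAST j. 1 \<le> j \<and> (\<forall>k\<in>{j..i}. \<sigma> k \<ge> \<sigma> i))..<i + 2])"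
proof -
  define j where "j = (LEAST j. 1 \<le> j \<and> (\<forall>k\<in>{j..i}. \<sigma> k \<ge> \<sigma> i))"
  have perm: "\<sigma> permutes {1..n}" and no312: "\<not> (\<exists>i1 i2 i3. 1 \<le> i1 \<and> i1 < i2 \<and> i2 < i3 \<and> i3 \<le> n \<and>
              \<sigma> i1 > \<sigma> i3 \<and> \<sigma> i3 > \<sigma> i2)" using assms(1) unfolding avoids312_def by blast+
  have inj: "inj \<sigma>" using perm permutes_inj by blast
  have exj: "1 \<le> i \<and> (\<forall>k\<in>{i..i}. \<sigma> k \<ge> \<sigma> i)" using assms by simp
  have j1': "1 \<le> j \<and> (\<forall>k\<in>{j..i}. \<sigma> k \<ge> \<sigma> i)"
    using LeastI[of "\<lambda>j. 1 \<le> j \<and> (\<forall>k\<in>{j..i}. \<sigma> k \<ge> \<sigma> i)", OF exj, folded j_def] .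
  then have j1: "1 \<le> j" "\<forall>k\<in>{j..i}. \<sigma> k \<ge> \<sigma> i" by auto
  have j2: "j \<le> i" using Least_le[of "\<lambda>j. 1 \<le> j \<and> (\<forall>k\<in>{j..i}. \<sigma> k \<ge> \<sigma> i)", OF exj, folded j_def] .
  have gt: "\<sigma> k > \<sigma> i" if "j \<le> k" "k < i" for k
  proof -
    have "\<sigma> k \<ge> \<sigma> i" using j1 that by auto
    moreover have "\<sigma> k \<noteq> \<sigma> i" using inj that by (simp add: inj_eq)
    ultimately show ?thesis by simp
  qed
  have j3: "\<sigma> (j - 1) < \<sigma> i" if "1 < j"
  proof -
    have "j - 1 < j" using that by simp
    then have "\<not> (1 \<le> j - 1 \<and> (\<forall>k\<in>{j-1..i}. \<sigma> k \<ge> \<sigma> i))"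
      using not_less_Least[of "j-1" "\<lambda>j. 1 \<le> j \<and> (\<forall>k\<in>{j..i}. \<sigma> k \<ge> \<sigma> i)", folded j_def] by blast
    moreover have "1 \<le> j - 1" using that by simp
    ultimately obtain k where k: "k \<in> {j-1..i}" "\<not> \<sigma> k \<ge> \<sigma> i" by blast
    have "k = j - 1"
    proof (rule ccontr)
      assume "k \<noteq> j - 1"
      then have "k \<in> {j..i}" using k(1) by auto
      then show False using k(2) j1(2) by blast
    qed
    then show ?thesis using k by simp
  qed
  define \<mu> where "\<mu> m p = (if p = m then \<sigma> (i+1) else if m < p \<and> p \<le> i+1 then \<sigma> (p-1) else \<sigma> p)" for m p
  have step: "allowable_swap n (\<mu> m) (\<mu> (m-1))" if "j < m" "m \<le> i" for m
  proof -
    have e1: "\<mu> m (m - 1 + 1) = \<sigma> (i+1)" using that j1 by (auto simp: \<mu>_def)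
    have e2: "\<mu> m (i + 1) = \<sigma> i" using that j1 by (auto simp: \<mu>_def)
    have e3: "\<mu> m (m - 1) = \<sigma> (m - 1)" using that j1 by (auto simp: \<mu>_def)
    have g: "\<sigma> (m-1) > \<sigma> i" using gt[of "m-1"] that by simp
    have e4: "\<mu> (m-1) = \<mu> m \<circ> transpose (m-1) (m-1+1)"
      using that by (auto simp: fun_eq_iff \<mu>_def transpose_def)
    show ?thesis unfolding allowable_swap_def
      apply (rule exI[of _ "m-1"], rule exI[of _ "i+1"])
      using e1 e2 e3 e4 g that j1 assms(3,4) by simp
  qed
  have path: "(allowable_swap n)\<^sup>*\<^sup>* (\<mu> i) (\<mu> (i - d))" if "d \<le> i - j" for d
    using that
  proof (induction d)
    case 0 then show ?case by simp
  next
    case (Suc d)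
    have "allowable_swap n (\<mu> (i - d)) (\<mu> (i - d - 1))" using step[of "i - d"] Suc.prems by simp
    then show ?case using Suc by (simp add: rtranclp.rtrancl_into_rtrancl)
  qed
  have tau: "\<sigma> \<circ> transpose i (i + 1) = \<mu> i"
    by (auto simp: fun_eq_iff \<mu>_def transpose_def)
  have path2: "(allowable_swap n)\<^sup>*\<^sup>* (\<sigma> \<circ> transpose i (i + 1)) (\<mu> j)"
    using path[of "i - j"] j2 tau by simp
  have cyc: "\<sigma> \<circ> cycle_of_list (rev [j..<i + 2]) = \<mu> j"
  proof
    fix x
    have "cycle_of_list (rev [j..<Suc (i+1)]) x = (if j < x \<and> x \<le> i+1 then x - 1 else if x = j then i+1 else x)"
      by (rule cyc_formula) (use j2 in simp)
    then show "(\<sigma> \<circ> cycle_of_list (rev [j..<i + 2])) x = \<mu> j x"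
      by (auto simp: \<mu>_def)
  qed
  have tperm: "(\<sigma> \<circ> transpose i (i + 1)) permutes {1..n}"
    by (rule permutes_compose[OF permutes_swap_id perm]) (use assms in auto)
  have T: False if "1 \<le> a" "a < b" "b < c" "c \<le> n" "\<sigma> c < \<sigma> a" "\<sigma> b < \<sigma> c" for a b c
    using no312 that by blast
  have ge: "\<sigma> k \<ge> \<sigma> i" if "j \<le> k" "k \<le> i" for k using j1 that by auto
  have av: "avoids312 n (\<mu> j)"
  proof -
    have pm: "\<mu> j permutes {1..n}" using star_inv[OF path2] tperm by blast
    have "\<not> (\<exists>i1 i2 i3. 1 \<le> i1 \<and> i1 < i2 \<and> i2 < i3 \<and> i3 \<le> n \<and>
              \<mu> j i1 > \<mu> j i3 \<and> \<mu> j i3 > \<mu> j i2)"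
    proof
      assume "\<exists>i1 i2 i3. 1 \<le> i1 \<and> i1 < i2 \<and> i2 < i3 \<and> i3 \<le> n \<and>
              \<mu> j i1 > \<mu> j i3 \<and> \<mu> j i3 > \<mu> j i2"
      then obtain i1 i2 i3 where h: "1 \<le> i1" "i1 < i2" "i2 < i3" "i3 \<le> n" "\<mu> j i3 < \<mu> j i1" "\<mu> j i2 < \<mu> j i3"
        by blast
      define g where "g p = (if p = j then i+1 else if j < p \<and> p \<le> i+1 then p-1 else p)" for p
      have mg: "\<mu> j p = \<sigma> (g p)" for p by (simp add: \<mu>_def g_def)
      have mono: "g p < g q" if "p < q" "p \<noteq> j" "q \<noteq> j" for p q using that by (auto simp: g_def)
      have g1: "1 \<le> g p" if "1 \<le> p" "p \<noteq> j" for p using that j1 by (auto simp: g_def)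
      have gn: "g p \<le> n" if "p \<le> n" for p using that assms(3) by (auto simp: g_def)
      have m1: "\<mu> j j = \<sigma> (i+1)" by (simp add: \<mu>_def)
      have m2: "\<mu> j p = \<sigma> (p - 1)" if "j < p" "p \<le> i+1" for p using that by (simp add: \<mu>_def)
      have m3: "\<mu> j p = \<sigma> p" if "p < j \<or> p > i+1" for p using that j2 by (auto simp: \<mu>_def)
      show False
      proof (cases "i1 = j")
        case True
        have "\<not> i2 \<le> i+1"
        proof
          assume "i2 \<le> i+1"
          then have "\<mu> j i2 = \<sigma> (i2 - 1)" using m2 h True by simp
          moreover have "\<sigma> (i2 - 1) \<ge> \<sigma> i" using ge[of "i2 - 1"] h True \<open>i2 \<le> i+1\<close> by simp
          ultimately show False using h True m1 assms(4) by simp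
        qed
        then have "\<mu> j i2 = \<sigma> i2" "\<mu> j i3 = \<sigma> i3" using m3 h by auto
        then show False using T[of "i+1" i2 i3] h True m1 \<open>\<not> i2 \<le> i+1\<close> by simp
      next
        case F1: False
        show False
        proof (cases "i2 = j")
          case True
          have a1: "\<mu> j i1 = \<sigma> i1" using m3 h True by simp
          show False
          proof (cases "i3 \<le> i+1")
            case False
            then have "\<mu> j i3 = \<sigma> i3" using m3 by simp
            then show False using T[of i1 "i+1" i3] h True a1 m1 False j2 by simp
          next
            case True2: True
            have "\<mu> j i3 = \<sigma> (i3 - 1)" using m2 h True True2 by simp
            moreover have "\<sigma> (i3 - 1) \<ge> \<sigma> i" using ge[of "i3 - 1"] h True True2 by simp
            ultimately have b1: "\<sigma> i < \<sigma> i1" using h a1 by simp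
            have jj: "1 < j" using h True by simp
            have b2: "\<sigma> (j - 1) < \<sigma> i" using j3[OF jj] .
            have "i1 \<noteq> j - 1" using b1 b2 by auto
            then have "i1 < j - 1" using h True by simp
            moreover have "j - 1 < i" using j2 jj by simp
            ultimately show False using T[of i1 "j-1" i] h b1 b2 assms(3) by simp
          qed
        next
          case F2: False
          show False
          proof (cases "i3 = j")
            case True
            have "\<mu> j i1 = \<sigma> i1" "\<mu> j i2 = \<sigma> i2" using m3 h True by auto
            then show False using T[of i1 i2 "i+1"] h True m1 j2 assms(3) by simp
          next
            case False
            have "g i1 < g i2" "g i2 < g i3" using mono h F1 F2 False by auto
            moreover have "1 \<le> g i1" "g i3 \<le> n" using g1 gn h F1 by auto
            ultimately show False using T[of "g i1" "g i2" "g i3"] h mg by simp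
          qed
        qed
      qed
    qed
    then show ?thesis using pm unfolding avoids312_def by blast
  qed
  have stab: "swap_stable n (\<mu> j)" using avoid_stable[OF av] .
  have uniq: "\<rho> = \<mu> j" if "(allowable_swap n)\<^sup>*\<^sup>* (\<sigma> \<circ> transpose i (i + 1)) \<rho>" "swap_stable n \<rho>" for \<rho>
  proof -
    have a1: "Inv n (\<sigma> \<circ> transpose i (i + 1)) = Inv n \<rho>" "\<rho> permutes {1..n}"
      using star_inv[OF that(1)] tperm by auto
    have a2: "Inv n (\<sigma> \<circ> transpose i (i + 1)) = Inv n (\<mu> j)" "\<mu> j permutes {1..n}"
      using star_inv[OF path2] tperm by auto
    have "Invs n \<rho> = Inv n \<rho>" using stable_Invs[OF that(2)] a1(2) permutes_inj by blast
    moreover have "Invs n (\<mu> j) = Inv n (\<mu> j)" using stable_Invs[OF stab] a2(2) permutes_inj by blast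
    ultimately have "Invs n (\<mu> j) = Invs n \<rho>" using a1 a2 by simp
    then show ?thesis using Invs_eq[OF a1(2) a2(2)] by simp
  qed
  have "pi_down n (\<sigma> \<circ> transpose i (i + 1)) = \<mu> j"
    unfolding pi_down_def
  proof (rule the_equality)
    show "(allowable_swap n)\<^sup>*\<^sup>* (\<sigma> \<circ> transpose i (i + 1)) (\<mu> j) \<and> swap_stable n (\<mu> j)"
      using path2 stab by (rule conjI)
  next
    fix \<rho> assume "(allowable_swap n)\<^sup>*\<^sup>* (\<sigma> \<circ> transpose i (i + 1)) \<rho> \<and> swap_stable n \<rho>"
    then show "\<rho> = \<mu> j" using uniq by blast
  qed
  then show ?thesis unfolding j_def[symmetric] using cyc by simp
qed

end
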